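(* Let $d\ge1$, $\sigma>0$, $\bar\gamma>0$, $\gamma\in(0,\bar\gamma]$, and let $T_\gamma,\tilde T_\gamma:\mathbb{R}^d\to\mathbb{R}^d$ be measurable. Assume there is a non-decreasing $\tau_\gamma:[0,\infty)\to[0,\infty)$ with $\|T_\gamma(x)-T_\gamma(\tilde x)\|\le\tau_\gamma(\|x-\tilde x\|)$ for all $x,\tilde x\in\mathbb{R}^d$, and that there is $c_\infty>0$ with $\sup_x\|T_\gamma(x)-\tilde T_\gamma(x)\|\le\gamma c_\infty$. Let $(Z_k)_{k\ge1}$ be i.i.d. standard Gaussian on $\mathbb{R}^d$, $(U_k)_{k\ge1}$ i.i.d. uniform on $[0,1]$, independent of each other and of an initial pair $(X_0,\tilde X_0)$, and define for $k\in\mathbb{N}$ $$X_{k+1}=T_\gamma(X_k)+(\sigma^2\gamma)^{1/2}Z_{k+1},\qquad \tilde X_{k+1}=B_{k+1}X_{k+1}+(1-B_{k+1})F_\gamma(X_k,\tilde X_k,Z_{k+1}),$$ where $B_{k+1}=\mathbb{1}_{[0,\infty)}(p_\gamma(X_k,\tilde X_k,Z_{k+1})-U_{k+1})$, and, with $E(x,\tilde x)=\tilde T_\gamma(\tilde x)-T_\gamma(x)$, $e(x,\tilde x)=E(x,\tilde x)/\|E(x,\tilde x)\|$ if $E(x,\tilde x)\neq0$ and $e(x,\tilde x)=e_0$ (a fixed unit vector) otherwise, $$F_\gamma(x,\tilde x,z)=\tilde T_\gamma(\tilde x)+(\sigma^2\gamma)^{1/2}\{\mathrm{Id}-2e(x,\tilde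 x)e(x,\tilde x)^\top\}z,\quad p_\gamma(x,\tilde x,z)=1\wedge\frac{\varphi_{\sigma^2\gamma}\{\|E(x,\tilde x)\|-(\sigma^2\gamma)^{1/2}\langle e(x,\tilde x),z\rangle\}}{\varphi_{\sigma^2\gamma}\{(\sigma^2\gamma)^{1/2}\langle e(x,\tilde x),z\rangle\}}.$$ Let $G_k=\langle e(X_{k-1},\tilde X_{k-1}),Z_k\rangle$, and for $a\ge0$, $g\in\mathbb{R}$, $u\in[0,1]$ set $\bar p_{\sigma^2\gamma}(a,g)=1\wedge\frac{\varphi_{\sigma^2\gamma}(a-(\sigma^2\gamma)^{1/2}g)}{\varphi_{\sigma^2\gamma}((\sigma^2\gamma)^{1/2}g)}$, $\mathcal H_\gamma(a,g,u)=\mathbb{1}_{[0,\infty)}(u-\bar p_{\sigma^2\gamma}(a,g))(a-2(\sigma^2\gamma)^{1/2}g)$ and $\mathcal G_\gamma(w,g,u)=\mathcal H_\gamma(\tau_\gamma(w)+\gamma c_\infty,g,u)$ for $w\ge0$. Then for every $k\in\mathbb{N}$, almost surely, $$\|X_{k+1}-\tilde X_{k+1}\|\le\mathcal G_\gamma(\|X_k-\tilde X_k\|,G_{k+1},U_{k+1}).$$ Moreover, for any $g\in\mathbb{R}$ and $u\in[0,1]$, $w\mapsto\mathcal G_\gamma(w,g,u)$ is non-decreasing on $[0,\infty)$.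
   Context: $\varphi_{s}(t)=(2\pi s)^{-1/2}e^{-t^2/(2s)}$ denotes the centered one-dimensional Gaussian density with variance $s>0$. *)

theory Defs
  imports "HOL-Probability.Probability"
begin

definition gauss_dens :: "real \<Rightarrow> real \<Rightarrow> real" where
  "gauss_dens s t = (2 * pi * s) powr (-1/2) * exp (- (t^2) / (2 * s))"

definition std_gauss_vec :: "'a::euclidean_space \<Rightarrow> real" where
  "std_gauss_vec x = (\<Prod>b\<in>Basis. std_normal_density (x \<bullet> b))"

definition gen_events :: "'w measure \<Rightarrow> ('w \<Rightarrow> 'b) \<Rightarrow> 'b measure \<Rightarrow> 'w set set" where
  "gen_events M X N = {X -` A \<inter> space M | A. A \<in> sets N}"

definition Edif :: "('a::euclidean_space \<Rightarrow> 'a) \<Rightarrow> ('a \<Rightarrow> 'a) \<Rightarrow> 'a \<Rightarrow> 'a \<Rightarrow> 'a" where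
  "Edif T Tt x xt = Tt xt - T x"

definition edir :: "('a::euclidean_space \<Rightarrow> 'a) \<Rightarrow> ('a \<Rightarrow> 'a) \<Rightarrow> 'a \<Rightarrow> 'a \<Rightarrow> 'a \<Rightarrow> 'a" where
  "edir T Tt e0 x xt = (if Edif T Tt x xt \<noteq> 0
      then (1 / norm (Edif T Tt x xt)) *\<^sub>R Edif T Tt x xt else e0)"

definition Fref :: "('a::euclidean_space \<Rightarrow> 'a) \<Rightarrow> ('a \<Rightarrow> 'a) \<Rightarrow> 'a \<Rightarrow> real \<Rightarrow> real
    \<Rightarrow> 'a \<Rightarrow> 'a \<Rightarrow> 'a \<Rightarrow> 'a" where
  "Fref T Tt e0 \<sigma> \<gamma> x xt z =
     (let e = edir T Tt e0 x xt
      in Tt xt + sqrt (\<sigma>^2 * \<gamma>) *\<^sub>R (z - (2 * (e \<bullet> z)) *\<^sub>R e))"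

definition pacc :: "('a::euclidean_space \<Rightarrow> 'a) \<Rightarrow> ('a \<Rightarrow> 'a) \<Rightarrow> 'a \<Rightarrow> real \<Rightarrow> real
    \<Rightarrow> 'a \<Rightarrow> 'a \<Rightarrow> 'a \<Rightarrow> real" where
  "pacc T Tt e0 \<sigma> \<gamma> x xt z =
     (let e = edir T Tt e0 x xt; v = \<sigma>^2 * \<gamma>
      in min 1 (gauss_dens v (norm (Edif T Tt x xt) - sqrt v * (e \<bullet> z))
                / gauss_dens v (sqrt v * (e \<bullet> z))))"

definition coupled_step :: "('a::euclidean_space \<Rightarrow> 'a) \<Rightarrow> ('a \<Rightarrow> 'a) \<Rightarrow> 'a \<Rightarrow> real \<Rightarrow> real
    \<Rightarrow> 'a \<times> 'a \<Rightarrow> 'a \<Rightarrow> real \<Rightarrow> 'a \<times> 'a" where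
  "coupled_step T Tt e0 \<sigma> \<gamma> p z u =
     (let x = fst p; xt = snd p;
          x' = T x + sqrt (\<sigma>^2 * \<gamma>) *\<^sub>R z;
          B = indicator {0..} (pacc T Tt e0 \<sigma> \<gamma> x xt z - u) :: real
      in (x', B *\<^sub>R x' + (1 - B) *\<^sub>R Fref T Tt e0 \<sigma> \<gamma> x xt z))"

primrec coupled_chain :: "('a::euclidean_space \<Rightarrow> 'a) \<Rightarrow> ('a \<Rightarrow> 'a) \<Rightarrow> 'a \<Rightarrow> real \<Rightarrow> real
    \<Rightarrow> ('w \<Rightarrow> 'a) \<Rightarrow> ('w \<Rightarrow> 'a) \<Rightarrow> (nat \<Rightarrow> 'w \<Rightarrow> 'a) \<Rightarrow> (nat \<Rightarrow> 'w \<Rightarrow> real)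
    \<Rightarrow> nat \<Rightarrow> 'w \<Rightarrow> 'a \<times> 'a" where
  "coupled_chain T Tt e0 \<sigma> \<gamma> X0 Xt0 Z U 0 w = (X0 w, Xt0 w)"
| "coupled_chain T Tt e0 \<sigma> \<gamma> X0 Xt0 Z U (Suc k) w =
     coupled_step T Tt e0 \<sigma> \<gamma> (coupled_chain T Tt e0 \<sigma> \<gamma> X0 Xt0 Z U k w) (Z (Suc k) w) (U (Suc k) w)"

definition pbar :: "real \<Rightarrow> real \<Rightarrow> real \<Rightarrow> real" where
  "pbar v a g = min 1 (gauss_dens v (a - sqrt v * g) / gauss_dens v (sqrt v * g))"

definition Hfun :: "real \<Rightarrow> real \<Rightarrow> real \<Rightarrow> real \<Rightarrow> real \<Rightarrow> real" where
  "Hfun \<sigma> \<gamma> a g u = indicator {0..} (u - pbar (\<sigma>^2 * \<gamma>) a g) * (a - 2 * sqrt (\<sigma>^2 * \<gamma>) * g)"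

definition Gfun :: "(real \<Rightarrow> real) \<Rightarrow> real \<Rightarrow> real \<Rightarrow> real \<Rightarrow> real \<Rightarrow> real \<Rightarrow> real \<Rightarrow> real" where
  "Gfun \<tau> cinf \<sigma> \<gamma> w g u = Hfun \<sigma> \<gamma> (\<tau> w + \<gamma> * cinf) g u"

end

theory Submission imports Defs begin

lemma pbar_exp:
  assumes "v > 0"
  shows "pbar v a g = min 1 (exp (- (a * (a - 2 * sqrt v * g)) / (2 * v)))"
proof -
  have c: "(2 * pi * v) powr (-1/2) > 0" using assms by simp
  have "gauss_dens v (a - sqrt v * g) / gauss_dens v (sqrt v * g)
      = exp (- ((a - sqrt v * g)^2) / (2 * v)) / exp (- ((sqrt v * g)^2) / (2 * v))"
    unfolding gauss_dens_def using c by (metis (no_types, lifting) mult_divide_mult_cancel_left_if not_less_iff_gr_or_eq)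
  also have "\<dots> = exp (- ((a - sqrt v * g)^2) / (2 * v) - (- ((sqrt v * g)^2) / (2 * v)))"
    by (rule exp_diff[symmetric])
  also have "- ((a - sqrt v * g)^2) / (2 * v) - (- ((sqrt v * g)^2) / (2 * v))
      = - (a * (a - 2 * sqrt v * g)) / (2 * v)"
    using assms by (simp add: field_simps power2_eq_square)
  finally show ?thesis by (simp add: pbar_def)
qed

lemma pbar_lt1:
  assumes "v > 0" "pbar v a g < 1"
  shows "a * (a - 2 * sqrt v * g) > 0"
proof (rule ccontr)
  assume "\<not> ?thesis"
  hence "a * (a - 2 * sqrt v * g) \<le> 0" by simp
  hence "- (a * (a - 2 * sqrt v * g)) / (2 * v) \<ge> 0" using assms(1) by (simp add: divide_nonpos_pos)
  hence "exp (- (a * (a - 2 * sqrt v * g)) / (2 * v)) \<ge> 1" by simp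
  thus False using assms by (simp add: pbar_exp)
qed

lemma pbar_anti:
  assumes "v > 0" "0 < a1" "a1 \<le> a2" "a1 - 2 * sqrt v * g > 0"
  shows "pbar v a2 g \<le> pbar v a1 g"
proof -
  have "a1 * (a1 - 2 * sqrt v * g) \<le> a2 * (a2 - 2 * sqrt v * g)"
    using assms by (intro mult_mono) auto
  hence "- (a2 * (a2 - 2 * sqrt v * g)) / (2 * v) \<le> - (a1 * (a1 - 2 * sqrt v * g)) / (2 * v)"
    using assms(1) by (simp add: divide_right_mono)
  thus ?thesis using assms(1) by (simp add: pbar_exp min.coboundedI2)
qed

lemma step_A:
  assumes "v > 0" "0 \<le> u" "u < 1" "0 \<le> a"
  shows "0 \<le> indicator {0..} (u - pbar v a g) * (a - 2 * sqrt v * g)"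
proof (cases "u - pbar v a g \<ge> 0")
  case True
  hence "pbar v a g < 1" using assms by linarith
  hence "a * (a - 2 * sqrt v * g) > 0" using pbar_lt1 assms by blast
  moreover have "pbar v a g > 0" using assms(1) by (simp add: pbar_exp)
  ultimately have "a - 2 * sqrt v * g > 0" using assms(4)
    by (auto simp: zero_less_mult_iff)
  thus ?thesis by simp
qed simp

lemma step_B:
  assumes "v > 0" "u \<le> 1" "0 \<le> a0" "a0 \<le> a" "pbar v a0 g < u"
  shows "\<bar>a0 - 2 * sqrt v * g\<bar> \<le> indicator {0..} (u - pbar v a g) * (a - 2 * sqrt v * g)"
proof -
  have "pbar v a0 g < 1" using assms by linarith
  hence q: "a0 * (a0 - 2 * sqrt v * g) > 0" using pbar_lt1 assms by blast
  hence a0: "a0 > 0" "a0 - 2 * sqrt v * g > 0" using assms(3)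
    by (auto simp: zero_less_mult_iff)
  have "pbar v a g \<le> pbar v a0 g" using pbar_anti[OF assms(1) a0(1) assms(4) a0(2)] .
  hence "indicator {0..} (u - pbar v a g) = (1::real)" using assms by simp
  thus ?thesis using a0 assms by simp
qed

lemma H_mono:
  assumes "v > 0" "0 \<le> u" "u \<le> 1" "0 < a1" "a1 \<le> a2"
  shows "indicator {0..} (u - pbar v a1 g) * (a1 - 2 * sqrt v * g)
       \<le> indicator {0..} (u - pbar v a2 g) * (a2 - 2 * sqrt v * g)"
proof (cases "u = 1")
  case True
  have "pbar v a g \<le> 1" for a by (simp add: pbar_def)
  thus ?thesis using True assms by simp
next
  case False
  hence u1: "u < 1" using assms by simp
  show ?thesis
  proof (cases "u - pbar v a1 g \<ge> 0")
    case True
    hence "pbar v a1 g < 1" using u1 by linarith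
    hence "a1 * (a1 - 2 * sqrt v * g) > 0" using pbar_lt1 assms by blast
    hence a: "a1 - 2 * sqrt v * g > 0" using assms(4)
      by (auto simp: zero_less_mult_iff)
    have "pbar v a2 g \<le> pbar v a1 g" using pbar_anti[OF assms(1) assms(4) assms(5) a] .
    thus ?thesis using True assms by simp
  next
    case False
    thus ?thesis using step_A[OF assms(1) assms(2) u1, of a2 g] assms(4,5) by simp
  qed
qed


lemma edir_norm:
  assumes "norm e0 = 1"
  shows "norm (edir T Tt e0 x xt) = 1"
  using assms by (simp add: edir_def)

lemma Edif_eq:
  "Edif T Tt x xt = norm (Edif T Tt x xt) *\<^sub>R edir T Tt e0 x xt"
  by (cases "Edif T Tt x xt = 0") (simp_all add: edir_def)

lemma step_vec:
  fixes T Tt :: "'a::euclidean_space \<Rightarrow> 'a"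
  assumes v: "\<sigma>^2 * \<gamma> > 0" and u: "0 \<le> u" "u < 1" and e0: "norm e0 = 1"
    and a: "norm (Edif T Tt x xt) \<le> a"
  shows "norm (fst (coupled_step T Tt e0 \<sigma> \<gamma> (x, xt) z u) - snd (coupled_step T Tt e0 \<sigma> \<gamma> (x, xt) z u))
     \<le> Hfun \<sigma> \<gamma> a (edir T Tt e0 x xt \<bullet> z) u"
proof -
  define v where "v = \<sigma>^2 * \<gamma>"
  define e where "e = edir T Tt e0 x xt"
  define g where "g = e \<bullet> z"
  define a0 where "a0 = norm (Edif T Tt x xt)"
  define X' where "X' = T x + sqrt v *\<^sub>R z"
  define F where "F = Fref T Tt e0 \<sigma> \<gamma> x xt z"
  have vpos: "v > 0" using v by (simp add: v_def)
  have pac: "pacc T Tt e0 \<sigma> \<gamma> x xt z = pbar v a0 g"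
    by (simp add: pacc_def pbar_def Let_def v_def a0_def g_def e_def)
  have H: "Hfun \<sigma> \<gamma> a (edir T Tt e0 x xt \<bullet> z) u
      = indicator {0..} (u - pbar v a g) * (a - 2 * sqrt v * g)"
    by (simp add: Hfun_def v_def g_def e_def)
  have en: "norm e = 1" using edir_norm[OF e0] by (simp add: e_def)
  have Ee: "Tt xt - T x = a0 *\<^sub>R e"
    using Edif_eq[of T Tt x xt e0] by (simp add: Edif_def a0_def e_def)
  have "F = Tt xt + sqrt v *\<^sub>R (z - (2 * g) *\<^sub>R e)"
    unfolding F_def Fref_def Let_def v_def g_def e_def ..
  hence "X' - F = T x - Tt xt + (2 * sqrt v * g) *\<^sub>R e"
    unfolding X'_def by (simp add: algebra_simps)
  also have "\<dots> = (2 * sqrt v * g) *\<^sub>R e - (Tt xt - T x)"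
    by (simp add: algebra_simps)
  also have "\<dots> = (2 * sqrt v * g - a0) *\<^sub>R e"
    unfolding Ee by (simp add: scaleR_diff_left)
  finally have XF: "norm (X' - F) = \<bar>a0 - 2 * sqrt v * g\<bar>" using en by simp
  have step: "coupled_step T Tt e0 \<sigma> \<gamma> (x, xt) z u =
     (X', (indicator {0..} (pbar v a0 g - u) :: real) *\<^sub>R X' + (1 - indicator {0..} (pbar v a0 g - u)) *\<^sub>R F)"
    unfolding coupled_step_def Let_def fst_conv snd_conv pac
    by (simp only: X'_def F_def v_def)
  have a0: "0 \<le> a0" "a0 \<le> a" using a by (auto simp: a0_def)
  show ?thesis
  proof (cases "pbar v a0 g - u \<ge> 0")
    case True
    then show ?thesis using step H step_A[OF vpos u, of a g] a0 by simp
  next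
    case False
    hence i0: "indicator {0..} (pbar v a0 g - u) = (0::real)" by simp
    have "norm (fst (coupled_step T Tt e0 \<sigma> \<gamma> (x, xt) z u) - snd (coupled_step T Tt e0 \<sigma> \<gamma> (x, xt) z u))
        = norm (X' - F)" unfolding step i0 by simp
    moreover have "pbar v a0 g < u" using False by simp
    ultimately show ?thesis using XF H step_B[OF vpos _ a0, of u g] u by simp
  qed
qed

theorem proposition6:
  fixes M :: "'w measure"
    and T Tt :: "'a::euclidean_space \<Rightarrow> 'a"
    and \<tau> :: "real \<Rightarrow> real"
    and e0 :: 'a
    and \<sigma> \<gamma> \<gamma>bar cinf :: real
    and X0 Xt0 :: "'w \<Rightarrow> 'a"
    and Z :: "nat \<Rightarrow> 'w \<Rightarrow> 'a"
    and U :: "nat \<Rightarrow> 'w \<Rightarrow> real"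
  assumes "prob_space M"
    and "\<sigma> > 0" and "\<gamma>bar > 0" and "0 < \<gamma>" and "\<gamma> \<le> \<gamma>bar"
    and "T \<in> borel_measurable borel" and "Tt \<in> borel_measurable borel"
    and "\<And>t. t \<ge> 0 \<Longrightarrow> \<tau> t \<ge> 0"
    and "mono_on {0..} \<tau>"
    and "\<And>x y. norm (T x - T y) \<le> \<tau> (norm (x - y))"
    and "cinf > 0"
    and "(SUP x. norm (T x - Tt x)) \<le> \<gamma> * cinf"
    and "bdd_above (range (\<lambda>x. norm (T x - Tt x)))"
    and "norm e0 = 1"
    and "X0 \<in> borel_measurable M" and "Xt0 \<in> borel_measurable M"
    and "\<And>k. k \<ge> 1 \<Longrightarrow> distributed M lborel (Z k) (\<lambda>x. ennreal (std_gauss_vec x))"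
    and "\<And>k. k \<ge> 1 \<Longrightarrow> distributed M lborel (U k) (\<lambda>x. ennreal (indicator {0..1} x))"
    and "prob_space.indep_sets M
           (case_sum (\<lambda>k. gen_events M (Z k) borel)
              (case_sum (\<lambda>k. gen_events M (U k) borel)
                 (\<lambda>_::unit. gen_events M (\<lambda>w. (X0 w, Xt0 w)) borel)))
           (Inl ` {1..} \<union> (Inr \<circ> Inl) ` {1..} \<union> {Inr (Inr ())})"
  shows "(\<forall>k. AE w in M.
            (let P = coupled_chain T Tt e0 \<sigma> \<gamma> X0 Xt0 Z U;
                 Gk1 = edir T Tt e0 (fst (P k w)) (snd (P k w)) \<bullet> Z (Suc k) w
             in norm (fst (P (Suc k) w) - snd (P (Suc k) w))
                  \<le> Gfun \<tau> cinf \<sigma> \<gamma> (norm (fst (P k w) - snd (P k w))) Gk1 (U (Suc k) w)))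
         \<and> (\<forall>g u. u \<in> {0..1} \<longrightarrow> mono_on {0..} (\<lambda>w. Gfun \<tau> cinf \<sigma> \<gamma> w g u))"
  proof -
  interpret prob_space M by (rule assms(1))
  have v: "\<sigma>^2 * \<gamma> > 0" using assms(2,4) by simp
  have supb: "norm (T x - Tt x) \<le> \<gamma> * cinf" for x
    using cSUP_upper[OF UNIV_I assms(13), of x] assms(12) by linarith
  have Eb: "norm (Edif T Tt x xt) \<le> \<tau> (norm (x - xt)) + \<gamma> * cinf" for x xt
  proof -
    have "Edif T Tt x xt = (T xt - T x) - (T xt - Tt xt)" by (simp add: Edif_def)
    hence "norm (Edif T Tt x xt) \<le> norm (T xt - T x) + norm (T xt - Tt xt)"
      by (metis norm_triangle_ineq4)
    moreover have "norm (T xt - T x) \<le> \<tau> (norm (x - xt))"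
      using assms(10)[of xt x] by (simp add: norm_minus_commute)
    ultimately show ?thesis using supb[of xt] by linarith
  qed
  have AEu: "AE w in M. 0 \<le> U (Suc k) w \<and> U (Suc k) w < 1" for k
  proof -
    have d: "distributed M lborel (U (Suc k)) (\<lambda>x. ennreal (indicator {0..1} x))"
      using assms(18) by simp
    hence meas: "U (Suc k) \<in> measurable M lborel"
      and dd: "distr M lborel (U (Suc k)) = density lborel (\<lambda>x. ennreal (indicator {0..1} x))"
      by (auto simp: distributed_def)
    have "AE x::real in density lborel (\<lambda>x::real. ennreal (indicator {0..1} x)). 0 \<le> x \<and> x < 1"
    proof (subst AE_density)
      show "(\<lambda>x::real. ennreal (indicator {0..1} x)) \<in> borel_measurable lborel"
        by (intro measurable_compose[OF _ measurable_ennreal] borel_measurable_indicator) simp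
      show "AE x::real in lborel. 0 < ennreal (indicator {0..1} x) \<longrightarrow> 0 \<le> x \<and> x < 1"
        using AE_lborel_singleton[of "1::real"]
        by eventually_elim (auto simp: indicator_def)
    qed
    hence A: "AE x in distr M lborel (U (Suc k)). 0 \<le> x \<and> x < 1" unfolding dd .
    have S: "{x \<in> space lborel. 0 \<le> x \<and> x < (1::real)} \<in> sets lborel" by measurable
    show ?thesis using A unfolding AE_distr_iff[OF meas S] .
  qed
  show ?thesis
  proof (intro conjI allI impI)
    fix k
    show "AE w in M.
            (let P = coupled_chain T Tt e0 \<sigma> \<gamma> X0 Xt0 Z U;
                 Gk1 = edir T Tt e0 (fst (P k w)) (snd (P k w)) \<bullet> Z (Suc k) w
             in norm (fst (P (Suc k) w) - snd (P (Suc k) w))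
                  \<le> Gfun \<tau> cinf \<sigma> \<gamma> (norm (fst (P k w) - snd (P k w))) Gk1 (U (Suc k) w))"
      using AEu[of k]
    proof eventually_elim
      case (elim w)
      obtain x xt where P: "coupled_chain T Tt e0 \<sigma> \<gamma> X0 Xt0 Z U k w = (x, xt)" by fastforce
      have "norm (fst (coupled_step T Tt e0 \<sigma> \<gamma> (x, xt) (Z (Suc k) w) (U (Suc k) w))
              - snd (coupled_step T Tt e0 \<sigma> \<gamma> (x, xt) (Z (Suc k) w) (U (Suc k) w)))
          \<le> Hfun \<sigma> \<gamma> (\<tau> (norm (x - xt)) + \<gamma> * cinf) (edir T Tt e0 x xt \<bullet> Z (Suc k) w) (U (Suc k) w)"
        using elim by (intro step_vec[OF v _ _ assms(14) Eb]) auto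
      thus ?case by (simp add: P Gfun_def Let_def)
    qed
  next
    fix g u :: real
    assume u: "u \<in> {0..1}"
    show "mono_on {0..} (\<lambda>w. Gfun \<tau> cinf \<sigma> \<gamma> w g u)"
    proof (rule mono_onI)
      fix r s :: real
      assume rs: "r \<in> {0..}" "s \<in> {0..}" "r \<le> s"
      have a1: "0 < \<tau> r + \<gamma> * cinf" using assms(8)[of r] rs assms(4,11)
        by (simp add: add_nonneg_pos)
      have a2: "\<tau> r + \<gamma> * cinf \<le> \<tau> s + \<gamma> * cinf" using mono_onD[OF assms(9) rs] by simp
      show "Gfun \<tau> cinf \<sigma> \<gamma> r g u \<le> Gfun \<tau> cinf \<sigma> \<gamma> s g u"
        unfolding Gfun_def Hfun_def using H_mono[OF v _ _ a1 a2, of u g] u by simp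
    qed
  qed
qed

end
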